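(* Let $\varepsilon\in(0,1]$. There exists a test $T:\Delta_{BD}\to\Sigma_1$ such that (i) $P(T(P))\le\varepsilon$ for every $P\in\Delta_{BD}$, and (ii) $T$ is nonmanipulable: for every probability measure $\zeta$ on $\Delta_{BD}$ with finite support there is a cylinder $C_\zeta$ such that $\zeta(\{P\in\Delta_{BD}:\omega\notin T(P)\})=0$ for every $\omega\in C_\zeta$.
   Context: Let $\Omega=\{0,1\}^{\mathbb N}$ (paths) with the product topology; for $\omega\in\Omega$, $t\ge0$, $\omega^t$ is the cylinder of paths agreeing with $\omega$ in the first $t$ coordinates. $\Sigma$ is a fixed $\sigma$-algebra on $\Omega$ containing all cylinders; $\Sigma_1$ is the family of open subsets of $\Omega$. $\mathbb P$ is the set of finitely additive probabilities on $(\Omega,\Sigma)$. $P\in\mathbb P$ is strongly nonatomic (an "opinion") if for every $E\in\Sigma$ and $\alpha\in[0,1]$ there is $F\in\Sigma$, $F\subseteq E$, with $P(F)=\alpha P(E)$. For $R\in\mathbb P$ and a cylinder with $R(\omega^t)>0$, $R(E\mid\omega^t)=R(E\cap\omega^t)/R(\omega^t)$. $P$ merges with $Q$ ($P,Q\in\mathbb P$) if for every $\varepsilon>0$, $Q(\{\omega:\sup_{E\in\Sigma}|P(E\mid\omega^t)-Q(E\mid\omega^t)|>\varepsilon\})\to0$ as $t\to\infty$ (cylinders with $Q(\omega^t)>0=P(\omega^t)$ counted in the set). $Q\ll P$ means: for every sequence $(E_n)$ in $\Sigma$, $P(E_n)\to0$ implies $Q(E_n)\to0$. $P\in\mathbb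 P$ has the Blackwell–Dubins property if $P$ merges with every $Q\in\mathbb P$ satisfying $Q\ll P$. $\Delta_{BD}$ is the set of strongly nonatomic $P\in\mathbb P$ having the Blackwell–Dubins property. *)

theory Defs
  imports "HOL-Analysis.Analysis" "HOL-Probability.Probability"
begin

text \<open>Paths: Omega = {0,1}^N, rendered as nat => bool; its topology is the library's
  product topology (instance fun :: (type, topological_space) topological_space, with
  bool discrete).\<close>

type_synonym path = "nat \<Rightarrow> bool"

definition cyl :: "path \<Rightarrow> nat \<Rightarrow> path set" where
  "cyl \<omega> t = {\<omega>'. \<forall>i<t. \<omega>' i = \<omega> i}"

definition is_cylinder :: "path set \<Rightarrow> bool" where
  "is_cylinder C \<longleftrightarrow> (\<exists>\<omega> t. C = cyl \<omega> t)"

definition admissible_sigma :: "path set set \<Rightarrow> bool" where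
  "admissible_sigma S \<longleftrightarrow> sigma_algebra UNIV S \<and> (\<forall>\<omega> t. cyl \<omega> t \<in> S)"

text \<open>Finitely additive probabilities on (Omega, S).  A set function is represented by a
  real-valued function on all sets, normalised to be 0 outside S (canonical representative).\<close>
definition fa_prob :: "path set set \<Rightarrow> (path set \<Rightarrow> real) \<Rightarrow> bool" where
  "fa_prob S P \<longleftrightarrow>
     (\<forall>E. E \<notin> S \<longrightarrow> P E = 0) \<and>
     (\<forall>E\<in>S. 0 \<le> P E) \<and>
     P UNIV = 1 \<and>
     (\<forall>E\<in>S. \<forall>F\<in>S. E \<inter> F = {} \<longrightarrow> P (E \<union> F) = P E + P F)"

definition strongly_nonatomic :: "path set set \<Rightarrow> (path set \<Rightarrow> real) \<Rightarrow> bool" where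
  "strongly_nonatomic S P \<longleftrightarrow>
     (\<forall>E\<in>S. \<forall>\<alpha>::real. 0 \<le> \<alpha> \<and> \<alpha> \<le> 1 \<longrightarrow> (\<exists>F\<in>S. F \<subseteq> E \<and> P F = \<alpha> * P E))"

text \<open>Conditional probability R(E | omega^t); only used when R(omega^t) > 0.\<close>
definition cond_prob :: "(path set \<Rightarrow> real) \<Rightarrow> path set \<Rightarrow> path \<Rightarrow> nat \<Rightarrow> real" where
  "cond_prob R E \<omega> t = R (E \<inter> cyl \<omega> t) / R (cyl \<omega> t)"

text \<open>Cylinders of Q-probability 0 contribute Q-measure 0 anyway.\<close>
definition bad_set :: "path set set \<Rightarrow> (path set \<Rightarrow> real) \<Rightarrow> (path set \<Rightarrow> real) \<Rightarrow> real \<Rightarrow> nat \<Rightarrow> path set" where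
  "bad_set S P Q \<epsilon> t = {\<omega>. Q (cyl \<omega> t) > 0 \<and>
      (P (cyl \<omega> t) = 0 \<or>
       (SUP E\<in>S. \<bar>cond_prob P E \<omega> t - cond_prob Q E \<omega> t\<bar>) > \<epsilon>)}"

definition merges :: "path set set \<Rightarrow> (path set \<Rightarrow> real) \<Rightarrow> (path set \<Rightarrow> real) \<Rightarrow> bool" where
  "merges S P Q \<longleftrightarrow> (\<forall>\<epsilon>>0. (\<lambda>t. Q (bad_set S P Q \<epsilon> t)) \<longlonglongrightarrow> 0)"

definition abs_cont :: "path set set \<Rightarrow> (path set \<Rightarrow> real) \<Rightarrow> (path set \<Rightarrow> real) \<Rightarrow> bool" where
  "abs_cont S Q P \<longleftrightarrow>
     (\<forall>En :: nat \<Rightarrow> path set. (\<forall>n. En n \<in> S) \<longrightarrow>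
        (\<lambda>n. P (En n)) \<longlonglongrightarrow> 0 \<longrightarrow> (\<lambda>n. Q (En n)) \<longlonglongrightarrow> 0)"

definition blackwell_dubins :: "path set set \<Rightarrow> (path set \<Rightarrow> real) \<Rightarrow> bool" where
  "blackwell_dubins S P \<longleftrightarrow> (\<forall>Q. fa_prob S Q \<and> abs_cont S Q P \<longrightarrow> merges S P Q)"

definition Delta_BD :: "path set set \<Rightarrow> (path set \<Rightarrow> real) set" where
  "Delta_BD S = {P. fa_prob S P \<and> strongly_nonatomic S P \<and> blackwell_dubins S P}"

definition nonmanipulable :: "path set set \<Rightarrow> ((path set \<Rightarrow> real) \<Rightarrow> path set) \<Rightarrow> bool" where
  "nonmanipulable S T \<longleftrightarrow>
     (\<forall>\<zeta> :: (path set \<Rightarrow> real) pmf. finite (set_pmf \<zeta>) \<and> set_pmf \<zeta> \<subseteq> Delta_BD S \<longrightarrow>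
        (\<exists>C. is_cylinder C \<and>
           (\<forall>\<omega>\<in>C. measure_pmf.prob \<zeta> {P \<in> Delta_BD S. \<omega> \<notin> T P} = 0)))"

end

theory Submission
  imports Defs
begin
lemma open_cyl: "open (cyl x t)"
proof -
  have "cyl x t = (\<Inter>i\<in>{..<t}. (\<lambda>\<omega>::path. \<omega> i) -` {x i})"
    by (auto simp: cyl_def)
  moreover have "open ((\<lambda>\<omega>::path. \<omega> i) -` {x i})" for i
    by (rule open_vimage) (auto intro: discrete_topology_class.open_discrete)
  ultimately show ?thesis by auto
qed

lemma cyl_anti: "t \<le> s \<Longrightarrow> cyl x s \<subseteq> cyl x t"
  by (auto simp: cyl_def)

lemma cyl_eq: "\<omega> \<in> cyl x t \<Longrightarrow> cyl \<omega> t = cyl x t"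
  by (auto simp: cyl_def)

lemma cyl_disj: "\<omega> \<notin> cyl x t \<Longrightarrow> cyl \<omega> t \<inter> cyl x t = {}"
  by (auto simp: cyl_def)

lemma fa_empty:
  assumes "fa_prob S P" "sigma_algebra UNIV S" shows "P {} = 0"
proof -
  interpret sa: sigma_algebra UNIV S by fact
  have "P ({} \<union> {}) = P {} + P {}" using assms(1) sa.empty_sets unfolding fa_prob_def by blast
  then show ?thesis by simp
qed

lemma fa_mono:
  assumes "fa_prob S P" "sigma_algebra UNIV S" "E \<in> S" "F \<in> S" "E \<subseteq> F"
  shows "P E \<le> P F"
proof -
  interpret sa: sigma_algebra UNIV S by fact
  have "F = E \<union> (F - E)" using assms by auto
  moreover have "F - E \<in> S" using assms by auto
  ultimately have "P F = P E + P (F - E)" using assms(1,3) unfolding fa_prob_def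
    by (metis Diff_disjoint)
  moreover have "0 \<le> P (F - E)" using \<open>F - E \<in> S\<close> assms(1) unfolding fa_prob_def by blast
  ultimately show ?thesis by simp
qed

lemma fa_nonneg: "fa_prob S P \<Longrightarrow> 0 \<le> P E"
  unfolding fa_prob_def by (cases "E \<in> S") auto

lemma cond_prob_bounds:
  assumes "fa_prob S R" "sigma_algebra UNIV S" "E \<in> S" "cyl \<omega> t \<in> S"
  shows "0 \<le> cond_prob R E \<omega> t" "cond_prob R E \<omega> t \<le> 1"
proof -
  interpret sa: sigma_algebra UNIV S by fact
  have a: "0 \<le> R (E \<inter> cyl \<omega> t)" "0 \<le> R (cyl \<omega> t)" using assms(1) by (auto simp: fa_nonneg)
  have b: "R (E \<inter> cyl \<omega> t) \<le> R (cyl \<omega> t)"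
    by (rule fa_mono[OF assms(1,2)]) (use assms in auto)
  show "0 \<le> cond_prob R E \<omega> t" using a by (simp add: cond_prob_def)
  show "cond_prob R E \<omega> t \<le> 1" using a b
    by (cases "R (cyl \<omega> t) = 0") (auto simp: cond_prob_def divide_le_eq_1)
qed

lemma key:
  assumes adm: "admissible_sigma S" and PD: "P \<in> Delta_BD S" and ep: "0 < \<epsilon>"
  shows "\<exists>t. P (cyl x t) \<le> \<epsilon>"
proof (rule ccontr)
  assume "\<not> ?thesis"
  hence big: "\<And>t. P (cyl x t) > \<epsilon>" by (meson not_le)
  have sa0: "sigma_algebra UNIV S" and cS: "\<And>\<omega> t. cyl \<omega> t \<in> S"
    using adm by (auto simp: admissible_sigma_def)
  interpret sa: sigma_algebra UNIV S by (rule sa0)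
  have IntS[simp]: "E \<inter> F \<in> S" "E \<union> F \<in> S" "E - F \<in> S" if "E \<in> S" "F \<in> S" for E F
    using that by auto
  have fa: "fa_prob S P" and sn: "strongly_nonatomic S P" and bd: "blackwell_dubins S P"
    using PD by (auto simp: Delta_BD_def)
  define C where "C t = cyl x t" for t
  have CS: "C t \<in> S" for t by (simp add: C_def cS)
  define nu where "nu E = lim (\<lambda>t. P (E \<inter> C t))" for E
  have nu_lim: "(\<lambda>t. P (E \<inter> C t)) \<longlonglongrightarrow> nu E" if "E \<in> S" for E
  proof -
    have "decseq (\<lambda>t. P (E \<inter> C t))"
      by (rule decseq_SucI, rule fa_mono[OF fa sa0])
         (use that CS in \<open>auto simp: C_def cyl_def\<close>)
    then obtain L where "(\<lambda>t. P (E \<inter> C t)) \<longlonglongrightarrow> L"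
      using decseq_convergent[of "\<lambda>t. P (E \<inter> C t)" 0] fa_nonneg[OF fa] by blast
    then show ?thesis unfolding nu_def by (simp add: limI)
  qed
  have nu_le: "nu E \<le> P (E \<inter> C t)" if "E \<in> S" for E t
  proof -
    have "decseq (\<lambda>t. P (E \<inter> C t))"
      by (rule decseq_SucI, rule fa_mono[OF fa sa0])
         (use that CS in \<open>auto simp: C_def cyl_def\<close>)
    thus ?thesis using nu_lim[OF that] decseq_ge by blast
  qed
  have nu_ge: "0 \<le> nu E" if "E \<in> S" for E
    using nu_lim[OF that] fa_nonneg[OF fa] by (auto intro: LIMSEQ_le_const)
  have nu_leP: "nu E \<le> P E" if "E \<in> S" for E
    using nu_le[OF that, of 0] fa_mono[OF fa sa0, of "E \<inter> C 0" E] that CS sa.Int by fastforce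
  have nu_cyl: "nu (F \<inter> C t) = nu F" if "F \<in> S" for F t
  proof -
    have "eventually (\<lambda>s. P (F \<inter> C s) = P ((F \<inter> C t) \<inter> C s)) sequentially"
      using eventually_ge_at_top[of t]
      by eventually_elim (metis C_def cyl_anti Int_absorb1 Int_assoc)
    hence "(\<lambda>s. P ((F \<inter> C t) \<inter> C s)) \<longlonglongrightarrow> nu F"
      using nu_lim[OF that] by (rule Lim_transform_eventually[rotated])
    thus ?thesis using nu_lim[of "F \<inter> C t"] that CS by (auto intro: LIMSEQ_unique)
  qed
  have nu_add: "nu (E \<union> F) = nu E + nu F" if "E \<in> S" "F \<in> S" "E \<inter> F = {}" for E F
  proof -
    have "P ((E \<union> F) \<inter> C s) = P (E \<inter> C s) + P (F \<inter> C s)" for s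
    proof -
      have "(E \<union> F) \<inter> C s = (E \<inter> C s) \<union> (F \<inter> C s)" by auto
      moreover have "E \<inter> C s \<in> S" "F \<inter> C s \<in> S" using that CS by auto
      ultimately show ?thesis using fa that(3) unfolding fa_prob_def by (metis disjoint_iff Int_iff)
    qed
    hence "(\<lambda>s. P ((E \<union> F) \<inter> C s)) \<longlonglongrightarrow> nu E + nu F"
      using tendsto_add[OF nu_lim[OF that(1)] nu_lim[OF that(2)]] by simp
    thus ?thesis using nu_lim[of "E \<union> F"] that by (auto intro: LIMSEQ_unique)
  qed
  have nu_mono: "nu E \<le> nu F" if "E \<in> S" "F \<in> S" "E \<subseteq> F" for E F
  proof -
    have "F = E \<union> (F - E)" using that by auto
    hence "nu F = nu E + nu (F - E)" using nu_add[of E "F - E"] that by auto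
    thus ?thesis using nu_ge[of "F - E"] that by auto
  qed
  define c where "c = nu UNIV"
  have cpos: "c \<ge> \<epsilon>"
    unfolding c_def
  proof (rule LIMSEQ_le_const)
    show "(\<lambda>t. P (UNIV \<inter> C t)) \<longlonglongrightarrow> nu UNIV" using nu_lim[OF sa.top] by simp
    show "\<exists>N. \<forall>n\<ge>N. \<epsilon> \<le> P (UNIV \<inter> C n)" using big by (auto simp: C_def less_imp_le)
  qed
  have nu_off: "nu (cyl \<omega> t \<inter> B) = 0" if "\<omega> \<notin> C t" "B \<in> S" for \<omega> t B
  proof -
    have "cyl \<omega> t \<inter> B \<inter> C t = {}" using cyl_disj[of \<omega> x t] that by (auto simp: C_def)
    hence "nu (cyl \<omega> t \<inter> B) = nu {}" using nu_cyl[of "cyl \<omega> t \<inter> B" t] that cS sa.Int[of "cyl \<omega> t" B] by auto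
    also have "\<dots> = 0" using nu_le[of "{}" 0] nu_ge[of "{}"] fa_empty[OF fa sa0] by auto
    finally show ?thesis .
  qed
  have contra: False if AS: "A \<in> S" and Apos: "nu A > 0" and dpos: "\<delta> > 0"
    and wit: "\<And>t. t \<ge> T0 \<Longrightarrow> \<exists>E\<in>S. \<bar>P (E \<inter> C t) / P (C t) - nu (E \<inter> A) / nu A\<bar> \<ge> \<delta>"
    for A \<delta> T0
  proof -
    define Q where "Q E = (if E \<in> S then nu (E \<inter> A) / nu A else 0)" for E
    have faQ: "fa_prob S Q"
      unfolding fa_prob_def
    proof (intro conjI ballI allI impI)
      show "Q E = 0" if "E \<notin> S" for E using that by (simp add: Q_def)
      show "0 \<le> Q E" if "E \<in> S" for E using that AS Apos nu_ge[of "E \<inter> A"] by (simp add: Q_def)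
      show "Q UNIV = 1" using Apos by (simp add: Q_def)
      show "Q (E \<union> F) = Q E + Q F" if "E \<in> S" "F \<in> S" "E \<inter> F = {}" for E F
      proof -
        have "(E \<union> F) \<inter> A = (E \<inter> A) \<union> (F \<inter> A)" by auto
        hence "nu ((E \<union> F) \<inter> A) = nu (E \<inter> A) + nu (F \<inter> A)"
          using nu_add[of "E \<inter> A" "F \<inter> A"] that AS by auto
        thus ?thesis using that by (simp add: Q_def add_divide_distrib)
      qed
    qed
    have QleP: "Q E \<le> P E / nu A" for E
    proof (cases "E \<in> S")
      case True
      have "nu (E \<inter> A) \<le> P E"
        using nu_leP[of "E \<inter> A"] fa_mono[OF fa sa0, of "E \<inter> A" E] True AS by auto
      thus ?thesis using True Apos by (simp add: Q_def divide_right_mono)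
    next
      case False thus ?thesis using fa Apos by (simp add: Q_def fa_nonneg)
    qed
    have ac: "abs_cont S Q P"
      unfolding abs_cont_def
    proof (intro allI impI)
      fix En :: "nat \<Rightarrow> path set"
      assume "(\<lambda>n. P (En n)) \<longlonglongrightarrow> 0"
      hence lz: "(\<lambda>n. P (En n) / nu A) \<longlonglongrightarrow> 0" using tendsto_divide_zero by blast
      show "(\<lambda>n. Q (En n)) \<longlonglongrightarrow> 0"
        by (rule real_tendsto_sandwich[OF _ _ tendsto_const lz])
           (simp_all add: QleP fa_nonneg[OF faQ])
    qed
    have mer: "merges S P Q" using bd faQ ac by (auto simp: blackwell_dubins_def)
    hence lim0: "(\<lambda>t. Q (bad_set S P Q (\<delta>/2) t)) \<longlonglongrightarrow> 0"
      using dpos unfolding merges_def by auto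
    have QC: "Q (C t) = 1" for t
      using nu_cyl[of A t] AS CS Apos by (simp add: Q_def Int_commute)
    have badeq: "bad_set S P Q (\<delta>/2) t = C t" if tT: "t \<ge> T0" for t
    proof
      show "bad_set S P Q (\<delta>/2) t \<subseteq> C t"
      proof
        fix \<omega> assume "\<omega> \<in> bad_set S P Q (\<delta>/2) t"
        hence "Q (cyl \<omega> t) > 0" by (simp add: bad_set_def)
        thus "\<omega> \<in> C t" using nu_off[of \<omega> t A] AS cS by (auto simp: Q_def split: if_splits)
           (metis div_0 less_irrefl)
      qed
      show "C t \<subseteq> bad_set S P Q (\<delta>/2) t"
      proof
        fix \<omega> assume \<omega>: "\<omega> \<in> C t"
        hence cw: "cyl \<omega> t = C t" by (simp add: C_def cyl_eq)
        obtain E where ES: "E \<in> S" and Ed: "\<bar>P (E \<inter> C t) / P (C t) - nu (E \<inter> A) / nu A\<bar> \<ge> \<delta>"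
          using wit[OF tT] by blast
        have "cond_prob Q E \<omega> t = nu (E \<inter> A) / nu A"
        proof -
          have "E \<inter> C t \<inter> A = (E \<inter> A) \<inter> C t" by auto
          hence "nu (E \<inter> C t \<inter> A) = nu (E \<inter> A)" using nu_cyl[of "E \<inter> A" t] ES AS by simp
          thus ?thesis using cw QC ES CS by (simp add: cond_prob_def Q_def)
        qed
        moreover have "cond_prob P E \<omega> t = P (E \<inter> C t) / P (C t)"
          using cw by (simp add: cond_prob_def)
        ultimately have d: "\<bar>cond_prob P E \<omega> t - cond_prob Q E \<omega> t\<bar> \<ge> \<delta>" using Ed by simp
        have bdd: "bdd_above ((\<lambda>E. \<bar>cond_prob P E \<omega> t - cond_prob Q E \<omega> t\<bar>) ` S)"
        proof (rule bdd_aboveI2)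
          fix F assume "F \<in> S"
          thus "\<bar>cond_prob P F \<omega> t - cond_prob Q F \<omega> t\<bar> \<le> 1"
          proof -
            have "0 \<le> cond_prob P F \<omega> t" "cond_prob P F \<omega> t \<le> 1"
              "0 \<le> cond_prob Q F \<omega> t" "cond_prob Q F \<omega> t \<le> 1"
              using cond_prob_bounds[OF fa sa0 \<open>F \<in> S\<close> cS] cond_prob_bounds[OF faQ sa0 \<open>F \<in> S\<close> cS]
              by auto
            thus ?thesis by (simp add: abs_le_iff)
          qed
        qed
        have "(SUP E\<in>S. \<bar>cond_prob P E \<omega> t - cond_prob Q E \<omega> t\<bar>) \<ge> \<delta>"
          using cSUP_upper2[OF bdd ES d] .
        hence "(SUP E\<in>S. \<bar>cond_prob P E \<omega> t - cond_prob Q E \<omega> t\<bar>) > \<delta>/2" using dpos by linarith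
        moreover have "Q (cyl \<omega> t) > 0" using cw QC by simp
        ultimately show "\<omega> \<in> bad_set S P Q (\<delta>/2) t" by (simp add: bad_set_def)
      qed
    qed
    have "eventually (\<lambda>t. Q (bad_set S P Q (\<delta>/2) t) = 1) sequentially"
      using eventually_ge_at_top[of T0] by eventually_elim (simp add: badeq QC)
    hence "(\<lambda>t. Q (bad_set S P Q (\<delta>/2) t)) \<longlonglongrightarrow> 1"
      by (rule tendsto_eventually)
    from LIMSEQ_unique[OF lim0 this] show False by simp
  qed
  show False
  proof (cases "\<forall>B\<in>S. nu B = 0 \<or> nu B = c")
    case True
    show False
    proof (rule contra[of UNIV "1/2" 0])
      show "nu UNIV > 0" using cpos ep by (simp add: c_def)
      fix t :: nat
      obtain F where FS: "F \<in> S" and FC: "F \<subseteq> C t" and PF: "P F = 1/2 * P (C t)"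
      proof -
        have "\<exists>F\<in>S. F \<subseteq> C t \<and> P F = 1/2 * P (C t)"
          using sn CS[of t] unfolding strongly_nonatomic_def
          by (metis (no_types) less_eq_real_def half_gt_zero_iff zero_less_one field_sum_of_halves
              le_add_same_cancel1 one_add_one divide_le_eq_1 zero_le_divide_1_iff zero_le_one)
        thus ?thesis using that by blast
      qed
      have Ppos: "P (C t) > 0" using big[of t] ep by (simp add: C_def)
      have r: "P (F \<inter> C t) / P (C t) = 1/2" using FC PF Ppos by (simp add: Int_absorb2)
      have "nu F / nu UNIV = 0 \<or> nu F / nu UNIV = 1"
        using True FS cpos ep by (auto simp: c_def)
      thus "\<exists>E\<in>S. \<bar>P (E \<inter> C t) / P (C t) - nu (E \<inter> UNIV) / nu UNIV\<bar> \<ge> 1/2"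
        using FS r by (intro bexI[of _ F]) auto
    qed simp_all
  next
    case False
    then obtain B where BS: "B \<in> S" and B0: "nu B \<noteq> 0" and Bc: "nu B \<noteq> c" by blast
    have "nu B \<le> c" using nu_mono[of B UNIV] BS by (simp add: c_def)
    hence B1: "0 < nu B" "nu B < c" using nu_ge[OF BS] B0 Bc by auto
    define r where "r = nu B / c"
    have r1: "r < 1" using B1 by (simp add: r_def)
    have "(\<lambda>t. P (B \<inter> C t) / P (C t)) \<longlonglongrightarrow> r"
      unfolding r_def using nu_lim[OF BS] nu_lim[OF sa.top] cpos ep
      by (auto simp: c_def intro!: tendsto_divide)
    moreover have "r < (1 + r)/2" using r1 by simp
    ultimately have "eventually (\<lambda>t. P (B \<inter> C t) / P (C t) < (1 + r)/2) sequentially"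
      by (rule order_tendstoD(2))
    then obtain T0 where T0: "\<And>t. t \<ge> T0 \<Longrightarrow> P (B \<inter> C t) / P (C t) < (1 + r)/2"
      by (auto simp: eventually_sequentially)
    show False
    proof (rule contra[of B "(1 - r)/2" T0])
      fix t :: nat assume "t \<ge> T0"
      thus "\<exists>E\<in>S. \<bar>P (E \<inter> C t) / P (C t) - nu (E \<inter> B) / nu B\<bar> \<ge> (1 - r)/2"
      proof (intro bexI[of _ B])
        have "P (B \<inter> C t) / P (C t) < (1 + r)/2" using T0 \<open>t \<ge> T0\<close> by blast
        moreover have "nu (B \<inter> B) / nu B = 1" using B1 by simp
        ultimately show "\<bar>P (B \<inter> C t) / P (C t) - nu (B \<inter> B) / nu B\<bar> \<ge> (1 - r)/2" by (simp add: abs_if)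
      qed (rule BS)
    qed (use BS B1 r1 in auto)
  qed
qed


theorem theorem3:
  fixes S :: "path set set" and \<epsilon> :: real
  assumes "admissible_sigma S"
    and "0 < \<epsilon>" and "\<epsilon> \<le> 1"
  shows "\<exists>T :: (path set \<Rightarrow> real) \<Rightarrow> path set.
           (\<forall>P\<in>Delta_BD S. open (T P)) \<and>
           (\<forall>P\<in>Delta_BD S. P (T P) \<le> \<epsilon>) \<and>
           nonmanipulable S T"
proof -
  define x :: path where "x = (\<lambda>_. False)"
  define tP where "tP P = (SOME t. P (cyl x t) \<le> \<epsilon>)" for P :: "path set \<Rightarrow> real"
  define T where "T P = cyl x (tP P)" for P
  have tP: "P (cyl x (tP P)) \<le> \<epsilon>" if "P \<in> Delta_BD S" for P
    unfolding tP_def using key[OF assms(1) that assms(2), of x] by (rule someI_ex)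
  have "nonmanipulable S T"
    unfolding nonmanipulable_def
  proof (intro allI impI)
    fix \<zeta> :: "(path set \<Rightarrow> real) pmf"
    assume z: "finite (set_pmf \<zeta>) \<and> set_pmf \<zeta> \<subseteq> Delta_BD S"
    define t0 where "t0 = Max (tP ` set_pmf \<zeta>)"
    have le: "tP P \<le> t0" if "P \<in> set_pmf \<zeta>" for P
      unfolding t0_def using z that by (auto intro: Max_ge)
    show "\<exists>C. is_cylinder C \<and> (\<forall>\<omega>\<in>C. measure_pmf.prob \<zeta> {P \<in> Delta_BD S. \<omega> \<notin> T P} = 0)"
    proof (intro exI conjI ballI)
      show "is_cylinder (cyl x t0)" by (auto simp: is_cylinder_def)
      fix \<omega> assume w: "\<omega> \<in> cyl x t0"
      have "set_pmf \<zeta> \<inter> {P \<in> Delta_BD S. \<omega> \<notin> T P} = {}"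
      proof (safe)
        fix P assume "P \<in> set_pmf \<zeta>" "\<omega> \<notin> T P"
        moreover have "\<omega> \<in> T P" using w le[OF \<open>P \<in> set_pmf \<zeta>\<close>] cyl_anti unfolding T_def by blast
        ultimately show "P \<in> {}" by simp
      qed
      thus "measure_pmf.prob \<zeta> {P \<in> Delta_BD S. \<omega> \<notin> T P} = 0"
        by (simp add: measure_pmf_zero_iff)
    qed
  qed
  thus ?thesis using tP by (intro exI[of _ T]) (auto simp: T_def open_cyl)
qed

end
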